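(* For each $t\in\{0,1,\dots,T\}$ and every state $(\bm{x},k)=((x_1,\dots,x_N),k)\in\mathbb{N}_0^{N+1}$, $$V^N_t(\bm{x},k)=\sum_{i=1}^N \tilde V^{N,i}_t(x_i,k).$$
   Context: Fix integers $N\ge1$, $T\ge1$, reals $\alpha_0,\beta_0>0$, and for each $i\in\mathcal{N}=\{1,\dots,N\}$ an integer failure threshold $\xi_i\ge1$ and costs $0<c_p^i<c_u^i$. $\mathbb{N}_0=\{0,1,2,\dots\}$. For real $r>0$ and $p\in(0,1)$, $NB(r,p)$ is the distribution on $\mathbb{N}_0$ with $P(n)=\frac{\Gamma(n+r)}{\Gamma(r)n!}p^r(1-p)^n$; $NB(0,p)$ is the point mass at $0$. For $t\in\{0,\dots,T\}$ let $p_t=\frac{\beta_0+Nt}{\beta_0+Nt+1}$. For $x\in\mathbb{N}_0$ let $\mathbb{I}_i(x)=1$ if $x\ge\xi_i$ and $0$ otherwise; the admissible actions for system $i$ at level $x$ are $\mathcal{A}_i(x)=\{0,1\}$ if $x<\xi_i$ and $\{1\}$ if $x\ge\xi_i$ ($a=1$ means replacement, $a=0$ means no action). Let $C_i(x,a)=a(1-\mathbb{I}_i(x))c_p^i+\mathbb{I}_i(x)c_u^i$. Original MDP: state $(\bm{x},k)\in\mathbb{N}_0^{N+1}$, actions $\bm{a}\in\prod_i\mathcal{A}_i(x_i)$, cost $C(\bm{x},\bm{a})=\sum_i C_i(x_i,a_i)$. $V^N_T(\bm{x},k)=\sum_i\mathbb{I}_i(x_i)c_u^i$, and for $t=T-1,\dots,0$: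 $V^N_t(\bm{x},k)=\min_{\bm{a}}\{C(\bm{x},\bm{a})+\mathbb{E}[V^N_{t+1}(\bm{x}'+\bm{Z},k+\sum_i Z_i)]\}$, where $Z_1,\dots,Z_N$ are i.i.d. $NB(\alpha_0+k,p_t)$ and $x'_i=x_i$ if $a_i=0$, $x'_i=0$ if $a_i=1$. Alternative (per-system) MDP: state $(x,k)\in\mathbb{N}_0^2$, $\tilde V^{N,i}_T(x,k)=\mathbb{I}_i(x)c_u^i$, and for $t=T-1,\dots,0$: $\tilde V^{N,i}_t(x,k)=\min_{a\in\mathcal{A}_i(x)}\{C_i(x,a)+\mathbb{E}[\tilde V^{N,i}_{t+1}(x(1-a)+Z,\;k+Z+K)]\}$, where $Z\sim NB(\alpha_0+k,p_t)$ and $K\sim NB((N-1)(\alpha_0+k),p_t)$ are independent. *)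

theory Defs
  imports "HOL-Analysis.Analysis"
begin

definition nbpmf :: "real \<Rightarrow> real \<Rightarrow> nat \<Rightarrow> real" where
  "nbpmf r p n = (if r = 0 then (if n = 0 then 1 else 0)
     else Gamma (real n + r) / (Gamma r * fact n) * p powr r * (1 - p) ^ n)"

definition pt :: "real \<Rightarrow> nat \<Rightarrow> nat \<Rightarrow> real" where
  "pt b0 N t = (b0 + real N * real t) / (b0 + real N * real t + 1)"

definition Ind :: "(nat \<Rightarrow> nat) \<Rightarrow> nat \<Rightarrow> nat \<Rightarrow> real" where
  "Ind xi i x = (if x \<ge> xi i then 1 else 0)"

definition Act :: "(nat \<Rightarrow> nat) \<Rightarrow> nat \<Rightarrow> nat \<Rightarrow> nat set" where
  "Act xi i x = (if x < xi i then {0, 1} else {1})"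

definition Cost :: "(nat \<Rightarrow> nat) \<Rightarrow> (nat \<Rightarrow> real) \<Rightarrow> (nat \<Rightarrow> real) \<Rightarrow> nat \<Rightarrow> nat \<Rightarrow> nat \<Rightarrow> real" where
  "Cost xi cp cu i x a = real a * (1 - Ind xi i x) * cp i + Ind xi i x * cu i"

text \<open>Original MDP, indexed by the number m = T - t of remaining steps.
  States: x :: nat => nat (only components 1..N matter), k :: nat.\<close>
primrec VO_steps :: "nat \<Rightarrow> nat \<Rightarrow> real \<Rightarrow> real \<Rightarrow> (nat \<Rightarrow> nat) \<Rightarrow> (nat \<Rightarrow> real) \<Rightarrow> (nat \<Rightarrow> real)
    \<Rightarrow> nat \<Rightarrow> (nat \<Rightarrow> nat) \<Rightarrow> nat \<Rightarrow> real" where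
  "VO_steps N T a0 b0 xi cp cu 0 x k = (\<Sum>i=1..N. Ind xi i (x i) * cu i)"
| "VO_steps N T a0 b0 xi cp cu (Suc m) x k =
     Min ((\<lambda>a. (\<Sum>i=1..N. Cost xi cp cu i (x i) (a i))
        + infsum (\<lambda>z. (\<Prod>i=1..N. nbpmf (a0 + real k) (pt b0 N (T - Suc m)) (z i))
              * VO_steps N T a0 b0 xi cp cu m
                  (\<lambda>i. (if a i = 1 then 0 else x i) + z i) (k + (\<Sum>i=1..N. z i)))
            (PiE {1..N} (\<lambda>_. UNIV)))
       ` PiE {1..N} (\<lambda>i. Act xi i (x i)))"

definition VO :: "nat \<Rightarrow> nat \<Rightarrow> real \<Rightarrow> real \<Rightarrow> (nat \<Rightarrow> nat) \<Rightarrow> (nat \<Rightarrow> real) \<Rightarrow> (nat \<Rightarrow> real)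
    \<Rightarrow> nat \<Rightarrow> (nat \<Rightarrow> nat) \<Rightarrow> nat \<Rightarrow> real" where
  "VO N T a0 b0 xi cp cu t x k = VO_steps N T a0 b0 xi cp cu (T - t) x k"

primrec VA_steps :: "nat \<Rightarrow> nat \<Rightarrow> real \<Rightarrow> real \<Rightarrow> (nat \<Rightarrow> nat) \<Rightarrow> (nat \<Rightarrow> real) \<Rightarrow> (nat \<Rightarrow> real)
    \<Rightarrow> nat \<Rightarrow> nat \<Rightarrow> nat \<Rightarrow> nat \<Rightarrow> real" where
  "VA_steps N T a0 b0 xi cp cu i 0 x k = Ind xi i x * cu i"
| "VA_steps N T a0 b0 xi cp cu i (Suc m) x k =
     Min ((\<lambda>a. Cost xi cp cu i x a
        + infsum (\<lambda>(z, c). nbpmf (a0 + real k) (pt b0 N (T - Suc m)) z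
              * nbpmf (real (N - 1) * (a0 + real k)) (pt b0 N (T - Suc m)) c
              * VA_steps N T a0 b0 xi cp cu i m (x * (1 - a) + z) (k + z + c)) UNIV)
       ` Act xi i x)"

definition VA :: "nat \<Rightarrow> nat \<Rightarrow> real \<Rightarrow> real \<Rightarrow> (nat \<Rightarrow> nat) \<Rightarrow> (nat \<Rightarrow> real) \<Rightarrow> (nat \<Rightarrow> real)
    \<Rightarrow> nat \<Rightarrow> nat \<Rightarrow> nat \<Rightarrow> nat \<Rightarrow> real" where
  "VA N T a0 b0 xi cp cu i t x k = VA_steps N T a0 b0 xi cp cu i (T - t) x k"

end

theory Submission imports Defs "HOL-Probability.Probability" begin

definition nbf :: "real \<Rightarrow> real \<Rightarrow> nat \<Rightarrow> real" where
  "nbf r p n = pochhammer r n / fact n * p powr r * (1 - p) ^ n"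

lemma nbpmf_eq: assumes "r \<ge> 0" "p > 0" shows "nbpmf r p n = nbf r p n"
proof (cases "r = 0")
  case True then show ?thesis using assms by (simp add: nbpmf_def nbf_def pochhammer_0_left)
next
  case False
  then have "r > 0" using assms by simp
  then have "r \<notin> \<int>\<^sub>\<le>\<^sub>0" by (auto elim!: nonpos_Ints_cases)
  then have "pochhammer r n = Gamma (real n + r) / Gamma r"
    using pochhammer_Gamma[of r n] by (simp add: add.commute)
  then show ?thesis using False by (simp add: nbpmf_def nbf_def)
qed

lemma nbf_nonneg: "r \<ge> 0 \<Longrightarrow> p \<le> 1 \<Longrightarrow> nbf r p n \<ge> 0"
proof -
  assume a: "r \<ge> 0" "p \<le> 1"
  have "pochhammer r n \<ge> 0"
  proof (cases "r = 0")
    case True then show ?thesis by (simp add: pochhammer_0_left)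
  next
    case False then show ?thesis using a by (intro pochhammer_nonneg) auto
  qed
  then show ?thesis unfolding nbf_def using a by (intro mult_nonneg_nonneg divide_nonneg_pos) auto
qed

lemma nbf_sums: assumes "r \<ge> 0" "0 < p" "p < 1" shows "nbf r p sums 1"
proof -
  have "\<bar>p - 1\<bar> < 1" using assms by auto
  from gen_binomial_real[OF this, of "-r"]
  have "(\<lambda>n. ((-r) gchoose n) * (p - 1)^n) sums (p powr (-r))" by simp
  from sums_mult[OF this, of "p powr r"]
  have "(\<lambda>n. p powr r * (((-r) gchoose n) * (p - 1)^n)) sums (p powr r * p powr (-r))" .
  moreover have "p powr r * p powr (-r) = 1" using assms by (simp add: powr_minus)
  moreover have "p powr r * (((-r) gchoose n) * (p - 1)^n) = nbf r p n" for n
  proof -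
    have "(p - 1)^n = (-1)^n * (1-p)^n" by (simp flip: power_mult_distrib)
    then show ?thesis unfolding nbf_def gbinomial_pochhammer
      by (simp add: field_simps flip: power_mult_distrib)
  qed
  ultimately show ?thesis by simp
qed

definition nbp :: "real \<Rightarrow> real \<Rightarrow> nat pmf" where
  "nbp r p = embed_pmf (nbf r p)"

lemma pmf_nbp: assumes "r \<ge> 0" "0 < p" "p < 1" shows "pmf (nbp r p) n = nbf r p n"
  unfolding nbp_def
proof (rule pmf_embed_pmf)
  show "\<And>x. 0 \<le> nbf r p x" using assms nbf_nonneg by auto
  have "(\<integral>\<^sup>+ x. ennreal (nbf r p x) \<partial>count_space UNIV) = (\<Sum>i. ennreal (nbf r p i))"
    by (rule nn_integral_count_space_nat)
  also have "\<dots> = ennreal (\<Sum>i. nbf r p i)"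
    using assms nbf_nonneg by (intro suminf_ennreal2 sums_summable[OF nbf_sums]) auto
  also have "(\<Sum>i. nbf r p i) = 1" using nbf_sums[OF assms] sums_unique by metis
  finally show "(\<integral>\<^sup>+ x. ennreal (nbf r p x) \<partial>count_space UNIV) = 1" by simp
qed

lemma nbp_conv: assumes "r1 \<ge> 0" "r2 \<ge> 0" "0 < p" "p < 1"
  shows "map_pmf (\<lambda>(u,c). u + c) (pair_pmf (nbp r1 p) (nbp r2 p)) = nbp (r1 + r2) p"
proof (rule pmf_eqI)
  fix n :: nat
  have pre: "(\<lambda>(u,c). u + c) -` {n} = (\<lambda>u. (u, n - u)) ` {..n}" by force
  have "pmf (map_pmf (\<lambda>(u,c). u + c) (pair_pmf (nbp r1 p) (nbp r2 p))) n
      = (\<Sum>x\<in>(\<lambda>u. (u, n - u)) ` {..n}. pmf (pair_pmf (nbp r1 p) (nbp r2 p)) x)"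
    unfolding pmf_map pre by (rule measure_measure_pmf_finite) simp
  also have "\<dots> = (\<Sum>u\<le>n. nbf r1 p u * nbf r2 p (n - u))"
    by (subst sum.reindex) (auto simp: inj_on_def pmf_pair pmf_nbp assms)
  also have "\<dots> = (\<Sum>u\<le>n. of_nat (n choose u) * pochhammer r1 u * pochhammer r2 (n - u) / fact n
                    * p powr (r1 + r2) * (1 - p) ^ n)"
  proof (rule sum.cong[OF refl])
    fix u assume "u \<in> {..n}"
    then have u: "u \<le> n" by simp
    have "(1 - p) ^ n = (1 - p) ^ u * (1 - p) ^ (n - u)" using u by (simp flip: power_add)
    then show "nbf r1 p u * nbf r2 p (n - u) = of_nat (n choose u) * pochhammer r1 u * pochhammer r2 (n - u) / fact n
                    * p powr (r1 + r2) * (1 - p) ^ n"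
      unfolding nbf_def using u assms by (simp add: binomial_fact powr_add field_simps)
  qed
  also have "\<dots> = nbf (r1 + r2) p n"
    unfolding nbf_def pochhammer_binomial_sum by (simp add: sum_divide_distrib sum_distrib_right)
  also have "\<dots> = pmf (nbp (r1 + r2) p) n" using assms by (simp add: pmf_nbp)
  finally show "pmf (map_pmf (\<lambda>(u,c). u + c) (pair_pmf (nbp r1 p) (nbp r2 p))) n = pmf (nbp (r1 + r2) p) n" .
qed

lemma nbp_zero: assumes "0 < p" "p < 1" shows "nbp 0 p = return_pmf 0"
  by (rule pmf_eqI) (use assms in \<open>auto simp add: pmf_nbp nbf_def pochhammer_0_left indicator_def\<close>)

lemma nbp_sum: assumes "finite J" "r \<ge> 0" "0 < p" "p < 1"
  shows "map_pmf (\<lambda>w. \<Sum>j\<in>J. w j) (Pi_pmf J d (\<lambda>_. nbp r p)) = nbp (real (card J) * r) p"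
  using assms(1)
proof (induction J rule: finite_induct)
  case empty
  then show ?case using assms by (simp add: nbp_zero)
next
  case (insert x F)
  have e: "(\<Sum>j\<in>insert x F. (f(x := y)) j) = y + (\<Sum>j\<in>F. f j)" for f :: "'a \<Rightarrow> nat" and y
    using insert(1,2) by (simp add: sum.insert) (rule sum.cong, auto)
  have "map_pmf (\<lambda>w. \<Sum>j\<in>insert x F. w j) (Pi_pmf (insert x F) d (\<lambda>_. nbp r p))
     = map_pmf (\<lambda>(y,f). y + (\<Sum>j\<in>F. f j)) (pair_pmf (nbp r p) (Pi_pmf F d (\<lambda>_. nbp r p)))"
    using insert(1,2) by (simp only: Pi_pmf_insert insert(1,2) not_False_eq_True map_pmf_comp) (intro map_pmf_cong refl, metis (no_types, lifting) case_prod_beta e)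
  also have "\<dots> = map_pmf (\<lambda>(u,c). u + c) (map_pmf (\<lambda>(a,b). (id a, (\<Sum>j\<in>F. b j))) (pair_pmf (nbp r p) (Pi_pmf F d (\<lambda>_. nbp r p))))"
    by (simp add: map_pmf_comp case_prod_unfold)
  also have "\<dots> = map_pmf (\<lambda>(u,c). u + c) (pair_pmf (nbp r p) (nbp (real (card F) * r) p))"
    by (simp only: map_pair insert.IH id_def map_pmf_ident)
  also have "\<dots> = nbp (r + real (card F) * r) p" using assms by (intro nbp_conv) auto
  also have "r + real (card F) * r = real (card (insert x F)) * r" using insert(1,2) by (simp add: algebra_simps)
  finally show ?case .
qed

lemma split_Pi: fixes q :: "nat pmf" assumes "finite I" "i \<in> I"
  shows "map_pmf (\<lambda>z. (z i, \<Sum>j\<in>I. z j)) (Pi_pmf I d (\<lambda>_. q))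
       = map_pmf (\<lambda>(u,c). (u, u + c)) (pair_pmf q (map_pmf (\<lambda>w. \<Sum>j\<in>I-{i}. w j) (Pi_pmf (I-{i}) d (\<lambda>_. q))))"
proof -
  have I: "I = insert i (I - {i})" using assms by auto
  have e: "(\<Sum>j\<in>I. (f(i := y)) j) = y + (\<Sum>j\<in>I-{i}. f j)" for f :: "'a \<Rightarrow> nat" and y
    using assms by (subst I, subst sum.insert) (auto intro!: sum.cong)
  have piI: "Pi_pmf I d (\<lambda>_. q) = map_pmf (\<lambda>(y,f). f(i:=y)) (pair_pmf q (Pi_pmf (I-{i}) d (\<lambda>_. q)))"
    using assms by (subst I, subst Pi_pmf_insert) auto
  then have "map_pmf (\<lambda>z. (z i, \<Sum>j\<in>I. z j)) (Pi_pmf I d (\<lambda>_. q))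
     = map_pmf (\<lambda>(y,f). (y, y + (\<Sum>j\<in>I-{i}. f j))) (pair_pmf q (Pi_pmf (I-{i}) d (\<lambda>_. q)))"
  proof -
    have fe: "(\<lambda>x::nat \<times> ('a \<Rightarrow> nat). ((case x of (y,f) \<Rightarrow> f(i:=y)) i, sum (case x of (y,f) \<Rightarrow> f(i:=y)) I))
        = (\<lambda>(y,f). (y, y + (\<Sum>j\<in>I-{i}. f j)))"
    proof (rule ext)
      fix x :: "nat \<times> ('a \<Rightarrow> nat)"
      obtain y f where x: "x = (y, f)" by (cases x)
      show "((case x of (y,f) \<Rightarrow> f(i:=y)) i, sum (case x of (y,f) \<Rightarrow> f(i:=y)) I) = (case x of (y,f) \<Rightarrow> (y, y + (\<Sum>j\<in>I-{i}. f j)))"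
        unfolding x prod.case using e[of f y] by simp
    qed
    show ?thesis unfolding piI by (simp only: map_pmf_comp fe)
  qed
  also have "\<dots> = map_pmf (\<lambda>(u,c). (u, u + c)) (map_pmf (\<lambda>(a,b). (id a, (\<Sum>j\<in>I-{i}. b j))) (pair_pmf q (Pi_pmf (I-{i}) d (\<lambda>_. q))))"
    by (simp add: map_pmf_comp case_prod_unfold)
  also have "\<dots> = map_pmf (\<lambda>(u,c). (u, u + c)) (pair_pmf q (map_pmf (\<lambda>w. \<Sum>j\<in>I-{i}. w j) (Pi_pmf (I-{i}) d (\<lambda>_. q))))"
    by (simp only: map_pair id_def map_pmf_ident)
  finally show ?thesis .
qed

lemma integrable_bnd: fixes f :: "'a \<Rightarrow> real" assumes "\<And>x. \<bar>f x\<bar> \<le> B"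
  shows "integrable (measure_pmf p) f"
  by (rule measure_pmf.integrable_const_bound[where B=B]) (use assms in auto)

lemma infsum_expect: fixes f :: "'a \<Rightarrow> real" assumes "\<And>x. \<bar>f x\<bar> \<le> B"
  shows "infsum (\<lambda>x. pmf p x * f x) UNIV = measure_pmf.expectation p f"
proof -
  have "Infinite_Set_Sum.abs_summable_on (pmf p) UNIV" by (simp add: abs_summable_on_def integrable_pmf)
  then have "Infinite_Set_Sum.abs_summable_on (\<lambda>x. pmf p x * B) UNIV" by (rule abs_summable_on_cmult_left)
  then have "Infinite_Set_Sum.abs_summable_on (\<lambda>x. pmf p x * f x) UNIV"
    by (rule abs_summable_on_comparison_test)
       (use assms in \<open>auto simp: abs_mult intro!: mult_left_mono order.trans[OF _ abs_ge_self]\<close>)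
  then show ?thesis by (simp add: pmf_expectation_eq_infsetsum infsetsum_infsum)
qed

lemma Min_sep: fixes g :: "'a \<Rightarrow> 'b \<Rightarrow> real"
  assumes "finite I" "\<And>i. i \<in> I \<Longrightarrow> finite (A i) \<and> A i \<noteq> {}"
  shows "Min ((\<lambda>a. \<Sum>i\<in>I. g i (a i)) ` PiE I A) = (\<Sum>i\<in>I. Min (g i ` A i))"
proof (rule Min_eqI)
  show "finite ((\<lambda>a. \<Sum>i\<in>I. g i (a i)) ` PiE I A)" using assms by (auto intro!: finite_PiE)
  show "(\<Sum>i\<in>I. Min (g i ` A i)) \<le> y" if "y \<in> (\<lambda>a. \<Sum>i\<in>I. g i (a i)) ` PiE I A" for y
  proof -
    from that obtain a where a: "a \<in> PiE I A" "y = (\<Sum>i\<in>I. g i (a i))" by auto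
    have "Min (g i ` A i) \<le> g i (a i)" if "i \<in> I" for i
      using a(1) assms(2)[OF that] that by (intro Min_le) (auto simp: PiE_iff)
    then show ?thesis unfolding a(2) by (intro sum_mono) blast
  qed
  define a0 where "a0 = restrict (\<lambda>i. SOME b. b \<in> A i \<and> g i b = Min (g i ` A i)) I"
  have ex: "\<exists>b. b \<in> A i \<and> g i b = Min (g i ` A i)" if "i \<in> I" for i
  proof -
    have "Min (g i ` A i) \<in> g i ` A i" using assms that by (intro Min_in) auto
    then show ?thesis by auto
  qed
  have a0: "a0 i \<in> A i \<and> g i (a0 i) = Min (g i ` A i)" if "i \<in> I" for i
    using someI_ex[OF ex[OF that]] that unfolding a0_def by simp
  have "a0 \<in> extensional I" unfolding a0_def by simp
  then have "a0 \<in> PiE I A" unfolding PiE_iff using a0 by blast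
  moreover have "(\<Sum>i\<in>I. g i (a0 i)) = (\<Sum>i\<in>I. Min (g i ` A i))"
    by (rule sum.cong[OF refl]) (use a0 in blast)
  ultimately show "(\<Sum>i\<in>I. Min (g i ` A i)) \<in> (\<lambda>a. \<Sum>i\<in>I. g i (a i)) ` PiE I A"
    by (metis (no_types, lifting) image_eqI)
qed

lemma pt_bnds: assumes "b0 > 0" shows "0 < pt b0 N t" "pt b0 N t < 1"
proof -
  have h: "0 < b0 + real N * real t" using assms by (intro add_pos_nonneg) auto
  then show "0 < pt b0 N t" "pt b0 N t < 1" by (simp_all add: pt_def divide_simps)
qed

lemma Act_props: "finite (Act xi i x)" "Act xi i x \<noteq> {}" "1 \<in> Act xi i x" "a \<in> Act xi i x \<Longrightarrow> a = 0 \<or> a = 1"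
  by (auto simp: Act_def split: if_splits)

lemma Cost_bnd: assumes "0 < cp i" "cp i < cu i" "a \<in> Act xi i x"
  shows "0 \<le> Cost xi cp cu i x a" "Cost xi cp cu i x a \<le> cu i"
  using assms Act_props(4)[OF assms(3)] by (auto simp: Cost_def Ind_def)

lemma VA_infsum:
  fixes H :: "nat \<times> nat \<Rightarrow> real"
  assumes "0 < p" "p < 1" "r \<ge> 0" "r' \<ge> 0" "\<And>w. \<bar>H w\<bar> \<le> B"
  shows "infsum (\<lambda>(z,c). nbpmf r p z * nbpmf r' p c * H (z,c)) UNIV
       = measure_pmf.expectation (pair_pmf (nbp r p) (nbp r' p)) H"
proof -
  have "(\<lambda>(z,c). nbpmf r p z * nbpmf r' p c * H (z,c)) = (\<lambda>w. pmf (pair_pmf (nbp r p) (nbp r' p)) w * H w)"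
    using assms by (auto simp: pmf_pair pmf_nbp nbpmf_eq)
  then show ?thesis using infsum_expect[OF assms(5)] by simp
qed

lemma VA_bnd:
  assumes "0 < cp i" "cp i < cu i" "b0 > 0" "a0 > 0"
  shows "0 \<le> VA_steps N T a0 b0 xi cp cu i m x k \<and> VA_steps N T a0 b0 xi cp cu i m x k \<le> real (Suc m) * cu i"
proof (induction m arbitrary: x k)
  case 0
  then show ?case using assms by (simp add: Ind_def)
next
  case (Suc m)
  let ?p = "pt b0 N (T - Suc m)"
  let ?r = "a0 + real k" let ?r' = "real (N - 1) * (a0 + real k)"
  let ?f = "\<lambda>a. Cost xi cp cu i x a
        + infsum (\<lambda>(z, c). nbpmf ?r ?p z * nbpmf ?r' ?p c
              * VA_steps N T a0 b0 xi cp cu i m (x * (1 - a) + z) (k + z + c)) UNIV"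
  have p: "0 < ?p" "?p < 1" using pt_bnds assms by auto
  have r: "?r \<ge> 0" "?r' \<ge> 0" using assms by auto
  have e: "infsum (\<lambda>(z, c). nbpmf ?r ?p z * nbpmf ?r' ?p c
              * VA_steps N T a0 b0 xi cp cu i m (x * (1 - a) + z) (k + z + c)) UNIV
      = measure_pmf.expectation (pair_pmf (nbp ?r ?p) (nbp ?r' ?p))
          (\<lambda>w. VA_steps N T a0 b0 xi cp cu i m (x * (1 - a) + fst w) (k + fst w + snd w))" for a
    using VA_infsum[OF p r, of "\<lambda>w. VA_steps N T a0 b0 xi cp cu i m (x * (1 - a) + fst w) (k + fst w + snd w)"
        "real (Suc m) * cu i"] Suc.IH by (simp add: case_prod_unfold abs_le_iff)
  have bnd: "0 \<le> ?f a \<and> ?f a \<le> real (Suc (Suc m)) * cu i" if "a \<in> Act xi i x" for a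
  proof -
    let ?E = "measure_pmf.expectation (pair_pmf (nbp ?r ?p) (nbp ?r' ?p))
          (\<lambda>w. VA_steps N T a0 b0 xi cp cu i m (x * (1 - a) + fst w) (k + fst w + snd w))"
    have hb: "\<bar>VA_steps N T a0 b0 xi cp cu i m (x * (1 - a) + fst w) (k + fst w + snd w)\<bar> \<le> real (Suc m) * cu i" for w
      using Suc.IH[of "x * (1 - a) + fst w" "k + fst w + snd w"] by (intro abs_leI) auto
    have "?E \<ge> 0" using Suc.IH by (intro integral_nonneg_AE) auto
    moreover have "?E \<le> real (Suc m) * cu i"
      using Suc.IH by (intro measure_pmf.integral_le_const integrable_bnd[OF hb] AE_I2) auto
    moreover have "real (Suc (Suc m)) * cu i = cu i + real (Suc m) * cu i" by (simp add: algebra_simps)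
    ultimately show ?thesis using Cost_bnd[of cp i cu a xi x, OF assms(1,2) that] e[of a] by linarith
  qed
  have "VA_steps N T a0 b0 xi cp cu i (Suc m) x k = Min (?f ` Act xi i x)" by simp
  moreover have "0 \<le> Min (?f ` Act xi i x)" using bnd Act_props by (subst Min_ge_iff) auto
  moreover have "Min (?f ` Act xi i x) \<le> ?f 1" by (intro Min_le finite_imageI Act_props(1) imageI Act_props(3))
  ultimately show ?case using bnd[OF Act_props(3)] by linarith
qed

lemma key:
  fixes V :: "nat \<Rightarrow> nat \<Rightarrow> nat \<Rightarrow> real" and x' :: "nat \<Rightarrow> nat"
  assumes p: "0 < p" "p < 1" and r: "r \<ge> 0"
    and B: "\<And>i y c. i \<in> {1..N} \<Longrightarrow> \<bar>V i y c\<bar> \<le> B i"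
  shows "infsum (\<lambda>z. (\<Prod>i=1..N. nbpmf r p (z i)) * (\<Sum>i=1..N. V i (x' i + z i) (k + (\<Sum>i=1..N. z i))))
            (PiE {1..N} (\<lambda>_. UNIV))
       = (\<Sum>i=1..N. infsum (\<lambda>(u,c). nbpmf r p u * nbpmf (real (N - 1) * r) p c * V i (x' i + u) (k + u + c)) UNIV)"
proof -
  define q where "q = nbp r p"
  define Q where "Q = Pi_pmf {1..N} undefined (\<lambda>_. q)"
  define F where "F = (\<lambda>z. \<Sum>i=1..N. V i (x' i + z i) (k + (\<Sum>i=1..N. z i)))"
  have pmfQ: "pmf Q z = (if z \<in> PiE {1..N} (\<lambda>_. UNIV) then (\<Prod>i=1..N. nbpmf r p (z i)) else 0)" for z
    unfolding Q_def q_def by (auto simp add: pmf_Pi PiE_iff extensional_def pmf_nbp nbpmf_eq p r)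
  have "infsum (\<lambda>z. (\<Prod>i=1..N. nbpmf r p (z i)) * F z) (PiE {1..N} (\<lambda>_. UNIV))
      = infsum (\<lambda>z. pmf Q z * F z) UNIV"
    by (rule infsum_cong_neutral) (auto simp: pmfQ)
  also have "\<dots> = measure_pmf.expectation Q F"
  proof (rule infsum_expect)
    fix z
    have "\<bar>F z\<bar> \<le> (\<Sum>i=1..N. \<bar>V i (x' i + z i) (k + (\<Sum>i=1..N. z i))\<bar>)"
      unfolding F_def by (rule sum_abs)
    also have "\<dots> \<le> (\<Sum>i=1..N. B i)" by (intro sum_mono B) auto
    finally show "\<bar>F z\<bar> \<le> (\<Sum>i=1..N. B i)" .
  qed
  also have "\<dots> = (\<Sum>i=1..N. measure_pmf.expectation Q (\<lambda>z. V i (x' i + z i) (k + (\<Sum>i=1..N. z i))))"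
    unfolding F_def
    by (rule Bochner_Integration.integral_sum[where I="{1..N}" and M="measure_pmf Q" and f="\<lambda>i z. V i (x' i + z i) (k + (\<Sum>i=1..N. z i))"])
       (rule integrable_bnd, rule B, simp)
  also have "\<dots> = (\<Sum>i=1..N. infsum (\<lambda>(u,c). nbpmf r p u * nbpmf (real (N - 1) * r) p c * V i (x' i + u) (k + u + c)) UNIV)"
  proof (rule sum.cong[OF refl])
    fix i assume i: "i \<in> {1..N}"
    have cJ: "card ({1..N} - {i}) = N - 1" using i by simp
    have r': "real (N - 1) * r \<ge> 0" using r by simp
    have "measure_pmf.expectation Q (\<lambda>z. V i (x' i + z i) (k + (\<Sum>i=1..N. z i)))
        = measure_pmf.expectation (map_pmf (\<lambda>z. (z i, \<Sum>j\<in>{1..N}. z j)) Q) (\<lambda>(u,s). V i (x' i + u) (k + s))"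
      by simp
    also have "map_pmf (\<lambda>z. (z i, \<Sum>j\<in>{1..N}. z j)) Q
        = map_pmf (\<lambda>(u,c). (u, u + c)) (pair_pmf q (nbp (real (N - 1) * r) p))"
      unfolding Q_def q_def using i by (simp add: split_Pi nbp_sum p r cJ)
    also have "measure_pmf.expectation (map_pmf (\<lambda>(u,c). (u, u + c)) (pair_pmf q (nbp (real (N - 1) * r) p)))
                  (\<lambda>(u,s). V i (x' i + u) (k + s))
        = measure_pmf.expectation (pair_pmf (nbp r p) (nbp (real (N - 1) * r) p))
                  (\<lambda>w. V i (x' i + fst w) (k + fst w + snd w))"
      unfolding q_def by (simp add: case_prod_unfold add.assoc)
    also have "\<dots> = infsum (\<lambda>(u,c). nbpmf r p u * nbpmf (real (N - 1) * r) p c * V i (x' i + u) (k + u + c)) UNIV"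
      using VA_infsum[OF p r r', of "\<lambda>w. V i (x' i + fst w) (k + fst w + snd w)" "B i"] B[OF i]
      by (simp add: case_prod_unfold)
    finally show "measure_pmf.expectation Q (\<lambda>z. V i (x' i + z i) (k + (\<Sum>i=1..N. z i))) = \<dots>" .
  qed
  finally show ?thesis unfolding F_def .
qed

lemma main:
  assumes b0: "b0 > 0" and a0: "a0 > 0" and c: "\<And>i. i \<in> {1..N} \<Longrightarrow> 0 < cp i \<and> cp i < cu i"
  shows "VO_steps N T a0 b0 xi cp cu m x k = (\<Sum>i=1..N. VA_steps N T a0 b0 xi cp cu i m (x i) k)"
proof (induction m arbitrary: x k)
  case 0
  then show ?case by simp
next
  case (Suc m)
  define p where "p = pt b0 N (T - Suc m)"
  define r where "r = a0 + real k"
  have p: "0 < p" "p < 1" unfolding p_def using pt_bnds b0 by auto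
  have r: "r \<ge> 0" unfolding r_def using a0 by simp
  define h where "h = (\<lambda>i a. Cost xi cp cu i (x i) a
        + infsum (\<lambda>(z, c). nbpmf r p z * nbpmf (real (N - 1) * r) p c
              * VA_steps N T a0 b0 xi cp cu i m (x i * (1 - a) + z) (k + z + c)) UNIV)"
  have VA: "VA_steps N T a0 b0 xi cp cu i (Suc m) (x i) k = Min (h i ` Act xi i (x i))" for i
    unfolding h_def p_def r_def by simp
  have B: "\<bar>VA_steps N T a0 b0 xi cp cu i m y c\<bar> \<le> real (Suc m) * cu i" if "i \<in> {1..N}" for i y c
    using VA_bnd[of cp i cu b0 a0 N T xi m y c] c[OF that] b0 a0 by (intro abs_leI) auto
  have eq: "(\<Sum>i=1..N. Cost xi cp cu i (x i) (a i))
        + infsum (\<lambda>z. (\<Prod>i=1..N. nbpmf r p (z i))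
              * VO_steps N T a0 b0 xi cp cu m
                  (\<lambda>i. (if a i = 1 then 0 else x i) + z i) (k + (\<Sum>i=1..N. z i)))
            (PiE {1..N} (\<lambda>_. UNIV))
      = (\<Sum>i=1..N. h i (a i))" if a: "a \<in> PiE {1..N} (\<lambda>i. Act xi i (x i))" for a
  proof -
    have "infsum (\<lambda>z. (\<Prod>i=1..N. nbpmf r p (z i))
              * VO_steps N T a0 b0 xi cp cu m
                  (\<lambda>i. (if a i = 1 then 0 else x i) + z i) (k + (\<Sum>i=1..N. z i)))
            (PiE {1..N} (\<lambda>_. UNIV))
      = infsum (\<lambda>z. (\<Prod>i=1..N. nbpmf r p (z i)) * (\<Sum>i=1..N. VA_steps N T a0 b0 xi cp cu i m
                  ((\<lambda>i. if a i = 1 then 0 else x i) i + z i) (k + (\<Sum>i=1..N. z i))))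
            (PiE {1..N} (\<lambda>_. UNIV))"
      by (simp only: Suc.IH)
    also have "\<dots> = (\<Sum>i=1..N. infsum (\<lambda>(u,c). nbpmf r p u * nbpmf (real (N - 1) * r) p c
           * VA_steps N T a0 b0 xi cp cu i m ((\<lambda>i. if a i = 1 then 0 else x i) i + u) (k + u + c)) UNIV)"
      by (rule key[OF p r B])
    also have "\<dots> = (\<Sum>i=1..N. infsum (\<lambda>(u,c). nbpmf r p u * nbpmf (real (N - 1) * r) p c
           * VA_steps N T a0 b0 xi cp cu i m (x i * (1 - a i) + u) (k + u + c)) UNIV)"
    proof (rule sum.cong[OF refl])
      fix i assume i: "i \<in> {1..N}"
      then have "a i \<in> Act xi i (x i)" using a by (auto simp: PiE_iff)
      then have "(if a i = 1 then 0 else x i) = x i * (1 - a i)" using Act_props(4) by fastforce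
      then show "infsum (\<lambda>(u,c). nbpmf r p u * nbpmf (real (N - 1) * r) p c
           * VA_steps N T a0 b0 xi cp cu i m ((\<lambda>i. if a i = 1 then 0 else x i) i + u) (k + u + c)) UNIV
         = infsum (\<lambda>(u,c). nbpmf r p u * nbpmf (real (N - 1) * r) p c
           * VA_steps N T a0 b0 xi cp cu i m (x i * (1 - a i) + u) (k + u + c)) UNIV" by simp
    qed
    finally show ?thesis unfolding h_def by (simp add: sum.distrib)
  qed
  have "VO_steps N T a0 b0 xi cp cu (Suc m) x k
      = Min ((\<lambda>a. (\<Sum>i=1..N. Cost xi cp cu i (x i) (a i))
        + infsum (\<lambda>z. (\<Prod>i=1..N. nbpmf r p (z i))
              * VO_steps N T a0 b0 xi cp cu m
                  (\<lambda>i. (if a i = 1 then 0 else x i) + z i) (k + (\<Sum>i=1..N. z i)))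
            (PiE {1..N} (\<lambda>_. UNIV))) ` PiE {1..N} (\<lambda>i. Act xi i (x i)))"
    unfolding p_def r_def by simp
  also have "\<dots> = Min ((\<lambda>a. \<Sum>i=1..N. h i (a i)) ` PiE {1..N} (\<lambda>i. Act xi i (x i)))"
    by (rule arg_cong[where f=Min], rule image_cong[OF refl eq])
  also have "\<dots> = (\<Sum>i=1..N. Min (h i ` Act xi i (x i)))"
    by (rule Min_sep) (auto simp: Act_props)
  finally show ?case by (simp only: VA)
qed

theorem theorem1:
  fixes N T :: nat and a0 b0 :: real and xi :: "nat \<Rightarrow> nat" and cp cu :: "nat \<Rightarrow> real"
    and t :: nat and x :: "nat \<Rightarrow> nat" and k :: nat
  assumes "N \<ge> 1" and "T \<ge> 1" and "a0 > 0" and "b0 > 0"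
    and "\<And>i. i \<in> {1..N} \<Longrightarrow> xi i \<ge> 1"
    and "\<And>i. i \<in> {1..N} \<Longrightarrow> 0 < cp i \<and> cp i < cu i"
    and "t \<le> T"
  shows "VO N T a0 b0 xi cp cu t x k = (\<Sum>i=1..N. VA N T a0 b0 xi cp cu i t (x i) k)"
  unfolding VO_def VA_def using main[of b0 a0 N cp cu T xi, OF assms(4,3,6)] by blast

end
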